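(* For the iterates of SONATA with step-size $\alpha\in(0,1]$ under Assumptions (A), (B), (C), (W), for every $\nu\ge0$: $$\|\delta^\nu\|^2\le4L_{\max}^2\|x_\perp^\nu\|^2+2\|y_\perp^\nu\|^2.$$
   Context: Problem (P): minimize $U=F+G$ over $\mathcal K$, $F=\frac1m\sum_{i=1}^mf_i$. (A): $\mathcal K\subseteq\mathbb R^d$ nonempty closed convex; $f_i$ twice differentiable convex on open $\mathcal O\supseteq\mathcal K$; $\mu I\preceq\nabla^2F\preceq LI$ on $\mathcal K$ ($\mu>0$); $G$ convex on $\mathcal K$. $\nabla^2f_i\preceq L_iI$ on $\mathcal K$, $L_{\max}=\max_iL_i$. (B): connected undirected graph on $\{1,\dots,m\}$, edges $\mathcal E$. (W): $w_{ii}>0$; for $i\ne j$, $w_{ij}>0$ iff $(i,j)\in\mathcal E$, else 0; $W$ doubly stochastic. (C): $\tilde f_i:\mathcal O\times\mathcal O\to\mathbb R$ $C^2$, $\nabla\tilde f_i(x;x)=\nabla f_i(x)$, $\nabla\tilde f_i(\cdot;x)$ Lipschitz, $\tilde f_i(\cdot;x)$ strongly convex on $\mathcal K$ for $x\in\mathcal K$. SONATA: $x_i^0\in\mathcal K$, $y_i^0=\nabla f_i(x_i^0)$; $\hat x_i^\nu=\arg\min_{x_i\in\mathcal K}\tilde f_i(x_i;x_i^\nu)+(y_i^\nu-\nabla f_i(x_i^\nu))^\top(x_i-x_i^\nu)+G(x_i)$; $x_i^{\nu+1/2}=x_i^\nu+\alpha(\hat x_i^\nu-x_i^\nu)$; $x_i^{\nu+1}=\sum_jw_{ij}x_j^{\nu+1/2}$;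 $y_i^{\nu+1}=\sum_jw_{ij}(y_j^\nu+\nabla f_j(x_j^{\nu+1})-\nabla f_j(x_j^\nu))$. $\delta^\nu$ stacks $\delta_i^\nu=\nabla F(x_i^\nu)-y_i^\nu$; $x_\perp^\nu=x^\nu-\mathbf1_m\otimes\frac1m\sum_ix_i^\nu$, $y_\perp^\nu=y^\nu-\mathbf1_m\otimes\frac1m\sum_iy_i^\nu$, with $x^\nu,y^\nu$ stacking the local vectors. *)

theory Defs
  imports "HOL-Analysis.Analysis"
begin

text \<open>Convexity of a real function on a (possibly non-convex) set Om:
  the convexity inequality along every segment contained in Om.\<close>
definition convex_fun_on :: "'a::real_vector set \<Rightarrow> ('a \<Rightarrow> real) \<Rightarrow> bool" where
  "convex_fun_on Om f \<longleftrightarrow>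
     (\<forall>x\<in>Om. \<forall>y\<in>Om. \<forall>t::real. 0 \<le> t \<and> t \<le> 1 \<and> (1 - t) *\<^sub>R x + t *\<^sub>R y \<in> Om \<longrightarrow>
        f ((1 - t) *\<^sub>R x + t *\<^sub>R y) \<le> (1 - t) * f x + t * f y)"

definition strongly_convex_fun_on :: "'a::real_inner set \<Rightarrow> ('a \<Rightarrow> real) \<Rightarrow> bool" where
  "strongly_convex_fun_on K f \<longleftrightarrow>
     (\<exists>c>0. convex_on K (\<lambda>z. f z - (c / 2) * (norm z)\<^sup>2))"

definition C2_on :: "'b::euclidean_space set \<Rightarrow> ('b \<Rightarrow> real) \<Rightarrow> bool" where
  "C2_on S f \<longleftrightarrow>
     (\<exists>g H. (\<forall>z\<in>S. (f has_derivative (\<lambda>h. g z \<bullet> h)) (at z)) \<and>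
            (\<forall>z\<in>S. (g has_derivative blinfun_apply (H z)) (at z)) \<and>
            continuous_on S (H :: 'b \<Rightarrow> 'b \<Rightarrow>\<^sub>L 'b))"

end

theory Submission
  imports Defs
begin


lemma second_diff_approx:
  fixes f :: "'a::euclidean_space \<Rightarrow> real" and g :: "'a \<Rightarrow> 'a"
  assumes S: "open S" "z \<in> S"
   and fg: "\<And>x. x \<in> S \<Longrightarrow> (f has_derivative (\<lambda>h. g x \<bullet> h)) (at x)"
   and gH: "(g has_derivative H) (at z)"
   and e: "e > 0"
  shows "\<exists>d>0. \<forall>s. 0 < s \<and> s < d \<longrightarrow>
     \<bar>f (z + s *\<^sub>R u + s *\<^sub>R v) - f (z + s *\<^sub>R u) - f (z + s *\<^sub>R v) + f z - s^2 * (H v \<bullet> u)\<bar> \<le> e * s^2"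
proof -
  obtain r where r: "r>0" "ball z r \<subseteq> S" using open_contains_ball S by blast
  define C where "C = (2*norm u + norm v) * norm u + 1"
  have C: "C > 0" unfolding C_def by (intro add_nonneg_pos mult_nonneg_nonneg) auto
  have eC: "e / C > 0" using e C by simp
  have lin: "bounded_linear H" using gH by (simp add: has_derivative_at_alt)
  obtain d1 where d1: "d1 > 0" "\<And>y. norm (y - z) < d1 \<Longrightarrow> norm (g y - g z - H (y - z)) \<le> (e / C) * norm (y - z)"
    using gH eC unfolding has_derivative_at_alt by meson
  define d where "d = min d1 r / (norm u + norm v + 1)"
  have dpos: "d > 0" using d1 r unfolding d_def by (intro divide_pos_pos) (auto intro: add_nonneg_pos)
  show ?thesis
  proof (intro exI[of _ d] conjI allI impI)
    show "d > 0" by (rule dpos)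
    fix s :: real assume s: "0 < s \<and> s < d"
    have sd: "s * (norm u + norm v + 1) < min d1 r"
    proof -
      have pos: "norm u + norm v + 1 > 0" by (intro add_nonneg_pos) auto
      have "s < min d1 r / (norm u + norm v + 1)" using s unfolding d_def by simp
      then show ?thesis using pos by (simp add: pos_less_divide_eq mult.commute)
    qed
    have small1: "norm (t *\<^sub>R u + s *\<^sub>R v) < min d1 r" if "0 \<le> t" "t \<le> s" for t
    proof -
      have "norm (t *\<^sub>R u + s *\<^sub>R v) \<le> t * norm u + s * norm v"
        using norm_triangle_ineq[of "t *\<^sub>R u" "s *\<^sub>R v"] that s by simp
      also have "\<dots> \<le> s * (norm u + norm v + 1)"
      proof -
        have "t * norm u \<le> s * norm u" using that by (intro mult_right_mono) auto
        then show ?thesis using s by (simp add: algebra_simps)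
      qed
      finally show ?thesis using sd by linarith
    qed
    have small2: "norm (t *\<^sub>R u) < min d1 r" if "0 \<le> t" "t \<le> s" for t
    proof -
      have "norm (t *\<^sub>R u) \<le> s * norm u" using that by (simp add: mult_right_mono)
      also have "\<dots> \<le> s * (norm u + norm v + 1)" using s
        by (simp add: mult_left_mono)
      finally show ?thesis using sd by linarith
    qed
    define \<phi> where "\<phi> t = f (z + t *\<^sub>R u + s *\<^sub>R v) - f (z + t *\<^sub>R u)" for t
    have inS: "z + p \<in> S" if "norm p < min d1 r" for p
      using that r by (auto simp: dist_norm intro!: subsetD[OF r(2)])
    have derf: "((\<lambda>t. f (z + t *\<^sub>R u + p)) has_real_derivative (g (z + t *\<^sub>R u + p) \<bullet> u)) (at t)"
      if "z + t *\<^sub>R u + p \<in> S" for t p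
    proof -
      have 1: "((\<lambda>t. z + t *\<^sub>R u + p) has_derivative (\<lambda>h. h *\<^sub>R u)) (at t)"
        by (auto intro!: derivative_eq_intros)
      have "((\<lambda>t. f (z + t *\<^sub>R u + p)) has_derivative (\<lambda>h. g (z + t *\<^sub>R u + p) \<bullet> (h *\<^sub>R u))) (at t)"
        using has_derivative_compose[OF 1 fg[OF that]] by (simp add: o_def)
      then show ?thesis unfolding has_field_derivative_def
        by (rule has_derivative_eq_rhs) (auto simp: fun_eq_iff)
    qed
    have der: "DERIV \<phi> t :> (g (z + t *\<^sub>R u + s *\<^sub>R v) \<bullet> u - g (z + t *\<^sub>R u + 0) \<bullet> u)"
      if "0 \<le> t" "t \<le> s" for t
    proof -
      have a: "z + t *\<^sub>R u + s *\<^sub>R v \<in> S" using inS[OF small1[OF that]] by (simp add: add.assoc)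
      have b: "z + t *\<^sub>R u + 0 \<in> S" using inS[OF small2[OF that]] by (simp add: add.assoc)
      show ?thesis unfolding \<phi>_def[abs_def]
        using DERIV_diff[OF derf[OF a] derf[OF b]] by simp
    qed
    obtain \<theta> where th: "0 < \<theta>" "\<theta> < s"
      "\<phi> s - \<phi> 0 = (s - 0) * (g (z + \<theta> *\<^sub>R u + s *\<^sub>R v) \<bullet> u - g (z + \<theta> *\<^sub>R u + 0) \<bullet> u)"
      using MVT2[of 0 s \<phi>, OF _ der] s by auto
    define p1 where "p1 = \<theta> *\<^sub>R u + s *\<^sub>R v"
    define p2 where "p2 = \<theta> *\<^sub>R u"
    define E1 where "E1 = g (z + p1) - g z - H p1"
    define E2 where "E2 = g (z + p2) - g z - H p2"
    have nE1: "norm E1 \<le> (e / C) * norm p1"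
      using d1(2)[of "z + p1"] small1[of \<theta>] th unfolding E1_def p1_def by auto
    have nE2: "norm E2 \<le> (e / C) * norm p2"
      using d1(2)[of "z + p2"] small2[of \<theta>] th unfolding E2_def p2_def by auto
    have np1: "norm p1 \<le> s * norm u + s * norm v"
    proof -
      have "norm p1 \<le> \<theta> * norm u + s * norm v"
        unfolding p1_def using norm_triangle_ineq[of "\<theta> *\<^sub>R u" "s *\<^sub>R v"] th by simp
      also have "\<dots> \<le> s * norm u + s * norm v" using th by (simp add: mult_right_mono)
      finally show ?thesis .
    qed
    have np2: "norm p2 \<le> s * norm u" unfolding p2_def using th by (simp add: mult_right_mono)
    have Hdiff: "H p1 - H p2 = s *\<^sub>R H v"
      unfolding p1_def p2_def using lin
      by (simp add: linear_simps bounded_linear.linear)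
    have key: "g (z + p1) - g (z + p2) = s *\<^sub>R H v + (E1 - E2)"
      unfolding E1_def E2_def using Hdiff by (simp add: algebra_simps)
    have "\<bar>(E1 - E2) \<bullet> u\<bar> \<le> norm (E1 - E2) * norm u" by (rule Cauchy_Schwarz_ineq2)
    also have "\<dots> \<le> (norm E1 + norm E2) * norm u" by (simp add: mult_right_mono norm_triangle_ineq4)
    also have "\<dots> \<le> ((e / C) * (s * norm u + s * norm v) + (e / C) * (s * norm u)) * norm u"
    proof -
      have "norm E1 \<le> (e / C) * (s * norm u + s * norm v)"
        using nE1 np1 eC by (meson less_imp_le mult_left_mono order_trans)
      moreover have "norm E2 \<le> (e / C) * (s * norm u)"
        using nE2 np2 eC by (meson less_imp_le mult_left_mono order_trans)
      ultimately show ?thesis by (intro mult_right_mono add_mono) auto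
    qed
    also have "\<dots> = (e / C) * s * ((2 * norm u + norm v) * norm u)" by (simp add: algebra_simps)
    also have "\<dots> \<le> (e / C) * s * C" 
    proof (rule mult_left_mono)
      show "0 \<le> e / C * s" using eC s by (intro mult_nonneg_nonneg) auto
    qed (simp add: C_def)
    also have "\<dots> = e * s" using C by simp
    finally have EE: "\<bar>(E1 - E2) \<bullet> u\<bar> \<le> e * s" .
    have "f (z + s *\<^sub>R u + s *\<^sub>R v) - f (z + s *\<^sub>R u) - f (z + s *\<^sub>R v) + f z = \<phi> s - \<phi> 0"
      unfolding \<phi>_def by simp
    also have "\<dots> = s * ((g (z + p1) - g (z + p2)) \<bullet> u)"
      using th(3) unfolding p1_def p2_def by (simp add: add.assoc inner_diff_left)
    also have "\<dots> = s^2 * (H v \<bullet> u) + s * ((E1 - E2) \<bullet> u)"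
      unfolding key by (simp add: inner_add_left power2_eq_square algebra_simps)
    finally have "\<bar>f (z + s *\<^sub>R u + s *\<^sub>R v) - f (z + s *\<^sub>R u) - f (z + s *\<^sub>R v) + f z - s^2 * (H v \<bullet> u)\<bar>
        = s * \<bar>(E1 - E2) \<bullet> u\<bar>" using s by (simp add: abs_mult)
    also have "\<dots> \<le> s * (e * s)" using EE s by (simp add: mult_left_mono)
    finally show "\<bar>f (z + s *\<^sub>R u + s *\<^sub>R v) - f (z + s *\<^sub>R u) - f (z + s *\<^sub>R v) + f z - s^2 * (H v \<bullet> u)\<bar> \<le> e * s^2"
      by (simp add: power2_eq_square mult_ac)
  qed
qed


lemma small_eq0:
  fixes a :: real
  assumes "\<And>e. e > 0 \<Longrightarrow> \<bar>a\<bar> \<le> e"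
  shows "a = 0"
proof (rule ccontr)
  assume "a \<noteq> 0"
  then have "\<bar>a\<bar> > 0" by simp
  from assms[of "\<bar>a\<bar>/2"] this show False by simp
qed

lemma hess_sym:
  fixes f :: "'a::euclidean_space \<Rightarrow> real" and g :: "'a \<Rightarrow> 'a"
  assumes S: "open S" "z \<in> S"
   and fg: "\<And>x. x \<in> S \<Longrightarrow> (f has_derivative (\<lambda>h. g x \<bullet> h)) (at x)"
   and gH: "(g has_derivative H) (at z)"
  shows "H v \<bullet> u = H u \<bullet> v"
proof -
  have "\<bar>H v \<bullet> u - H u \<bullet> v\<bar> \<le> e" if e: "e > 0" for e
  proof -
    have e2: "e/2 > 0" using e by simp
    obtain d1 where d1: "d1 > 0" "\<And>s. 0 < s \<and> s < d1 \<Longrightarrow>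
     \<bar>f (z + s *\<^sub>R u + s *\<^sub>R v) - f (z + s *\<^sub>R u) - f (z + s *\<^sub>R v) + f z - s^2 * (H v \<bullet> u)\<bar> \<le> e/2 * s^2"
      using second_diff_approx[OF S fg gH e2, of u v] by blast
    obtain d2 where d2: "d2 > 0" "\<And>s. 0 < s \<and> s < d2 \<Longrightarrow>
     \<bar>f (z + s *\<^sub>R v + s *\<^sub>R u) - f (z + s *\<^sub>R v) - f (z + s *\<^sub>R u) + f z - s^2 * (H u \<bullet> v)\<bar> \<le> e/2 * s^2"
      using second_diff_approx[OF S fg gH e2, of v u] by blast
    define s where "s = min d1 d2 / 2"
    have s: "0 < s" "s < d1" "s < d2" using d1 d2 unfolding s_def by auto
    have eq: "z + s *\<^sub>R v + s *\<^sub>R u = z + s *\<^sub>R u + s *\<^sub>R v" by (simp add: algebra_simps)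
    have ar: "\<And>P Q R W x y c::real. \<bar>P - Q - R + W - x\<bar> \<le> c \<Longrightarrow> \<bar>P - R - Q + W - y\<bar> \<le> c \<Longrightarrow> \<bar>x - y\<bar> \<le> 2 * c"
      by arith
    have "\<bar>s^2 * (H v \<bullet> u) - s^2 * (H u \<bullet> v)\<bar> \<le> 2 * (e/2 * s^2)"
      using ar[OF d1(2)[of s] d2(2)[of s, unfolded eq]] s by simp
    moreover have "\<bar>s^2 * (H v \<bullet> u) - s^2 * (H u \<bullet> v)\<bar> = s^2 * \<bar>H v \<bullet> u - H u \<bullet> v\<bar>"
      by (simp add: right_diff_distrib[symmetric] abs_mult)
    ultimately have "s^2 * \<bar>H v \<bullet> u - H u \<bullet> v\<bar> \<le> e * s^2" by simp
    then show ?thesis using s by (simp add: mult.commute)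
  qed
  then show ?thesis using small_eq0[of "H v \<bullet> u - H u \<bullet> v"] by auto
qed

lemma hess_psd:
  fixes f :: "'a::euclidean_space \<Rightarrow> real" and g :: "'a \<Rightarrow> 'a"
  assumes S: "open S" "z \<in> S"
   and fg: "\<And>x. x \<in> S \<Longrightarrow> (f has_derivative (\<lambda>h. g x \<bullet> h)) (at x)"
   and gH: "(g has_derivative H) (at z)"
   and cvx: "convex_fun_on S f"
  shows "H h \<bullet> h \<ge> 0"
proof -
  have lin: "linear H" using gH has_derivative_linear by blast
  obtain r where r: "r>0" "ball z r \<subseteq> S" using open_contains_ball S by blast
  have "- (H h \<bullet> h) \<le> e" if e: "e > 0" for e
  proof -
    obtain d1 where d1: "d1 > 0" "\<And>s. 0 < s \<and> s < d1 \<Longrightarrow>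
     \<bar>f (z + s *\<^sub>R h + s *\<^sub>R (-h)) - f (z + s *\<^sub>R h) - f (z + s *\<^sub>R (-h)) + f z - s^2 * (H (-h) \<bullet> h)\<bar> \<le> e * s^2"
      using second_diff_approx[OF S fg gH e, of h "-h"] by blast
    have pos: "norm h + 1 > 0" by (intro add_nonneg_pos) auto
    define X where "X = r / (norm h + 1)"
    have rp: "X > 0" using r pos unfolding X_def by simp
    define s where "s = min d1 X / 2"
    have m1: "min d1 X \<le> d1" "min d1 X \<le> X" "min d1 X > 0" using d1 rp by auto
    have s: "0 < s" "s < d1" "s < X" using m1 unfolding s_def by linarith+
    have s3: "s < r / (norm h + 1)" using s(3) unfolding X_def .
    have "s * (norm h + 1) < r" using s3 pos by (simp add: pos_less_divide_eq)
    then have sh: "s * norm h < r" using s by (simp add: algebra_simps)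
    have in1: "z + s *\<^sub>R h \<in> S" using sh s r by (auto simp: dist_norm intro!: subsetD[OF r(2)])
    have in2: "z - s *\<^sub>R h \<in> S" using sh s r by (auto simp: dist_norm intro!: subsetD[OF r(2)])
    have mid: "(1 - 1/2) *\<^sub>R (z + s *\<^sub>R h) + (1/2::real) *\<^sub>R (z - s *\<^sub>R h) = z"
    proof -
      have "(1 - 1/2) *\<^sub>R (z + s *\<^sub>R h) + (1/2::real) *\<^sub>R (z - s *\<^sub>R h) = (1/2::real) *\<^sub>R (z + z)"
        by (simp add: algebra_simps)
      also have "\<dots> = z" by (simp add: scaleR_2[symmetric])
      finally show ?thesis .
    qed
    have "f z \<le> (1 - 1/2) * f (z + s *\<^sub>R h) + (1/2) * f (z - s *\<^sub>R h)"
    proof -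
      have "\<forall>x\<in>S. \<forall>y\<in>S. \<forall>t::real. 0 \<le> t \<and> t \<le> 1 \<and> (1 - t) *\<^sub>R x + t *\<^sub>R y \<in> S \<longrightarrow>
        f ((1 - t) *\<^sub>R x + t *\<^sub>R y) \<le> (1 - t) * f x + t * f y" using cvx unfolding convex_fun_on_def .
      then have "0 \<le> (1/2::real) \<and> (1/2::real) \<le> 1 \<and> (1 - 1/2) *\<^sub>R (z + s *\<^sub>R h) + (1/2::real) *\<^sub>R (z - s *\<^sub>R h) \<in> S \<longrightarrow>
          f ((1 - 1/2) *\<^sub>R (z + s *\<^sub>R h) + (1/2::real) *\<^sub>R (z - s *\<^sub>R h))
          \<le> (1 - 1/2) * f (z + s *\<^sub>R h) + (1/2) * f (z - s *\<^sub>R h)"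
        using in1 in2 by blast
      then have "f ((1 - 1/2) *\<^sub>R (z + s *\<^sub>R h) + (1/2::real) *\<^sub>R (z - s *\<^sub>R h))
          \<le> (1 - 1/2) * f (z + s *\<^sub>R h) + (1/2) * f (z - s *\<^sub>R h)"
        using S(2) unfolding mid by simp
      then show ?thesis unfolding mid .
    qed
    then have neg: "f z - f (z + s *\<^sub>R h) - f (z - s *\<^sub>R h) + f z \<le> 0" by simp
    have Hm: "H (-h) \<bullet> h = - (H h \<bullet> h)" using lin by (simp add: linear_neg)
    have "\<bar>f z - f (z + s *\<^sub>R h) - f (z - s *\<^sub>R h) + f z + s^2 * (H h \<bullet> h)\<bar> \<le> e * s^2"
      using d1(2)[of s] s unfolding Hm by simp
    then have "s^2 * (- (H h \<bullet> h)) \<le> s^2 * e" using neg by (simp add: algebra_simps)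
    moreover have "s^2 > 0" using s by simp
    ultimately show ?thesis by (rule mult_left_le_imp_le)
  qed
  then have "- (H h \<bullet> h) \<le> 0" using field_le_epsilon[of "- (H h \<bullet> h)" 0] by simp
  then show ?thesis by simp
qed

lemma sym_psd_norm:
  fixes H :: "'a::real_inner \<Rightarrow> 'a"
  assumes lin: "linear H" and sym: "\<And>u v. H v \<bullet> u = H u \<bullet> v"
    and psd: "\<And>h. 0 \<le> H h \<bullet> h" and up: "\<And>h. H h \<bullet> h \<le> L * (h \<bullet> h)"
  shows "norm (H h) \<le> L * norm h"
proof (cases "h = 0")
  case True then show ?thesis using lin by (simp add: linear_0)
next
  case hne: False
  have L: "L \<ge> 0"
  proof -
    have "0 \<le> L * (h \<bullet> h)" using psd[of h] up[of h] by linarith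
    moreover have "h \<bullet> h > 0" using hne by simp
    ultimately show ?thesis by (simp add: zero_le_mult_iff)
  qed
  show ?thesis
  proof (cases "H h = 0")
    case True then show ?thesis using L by simp
  next
    case False
    define k where "k = (norm h / norm (H h)) *\<^sub>R H h"
    have nk: "norm k = norm h" unfolding k_def using False by simp
    have kH: "k \<bullet> H h = norm h * norm (H h)" unfolding k_def using False
      by (simp add: power2_norm_eq_inner[symmetric] power2_eq_square)
    have "H (h + k) \<bullet> (h + k) - H (h - k) \<bullet> (h - k) = 2 * (H h \<bullet> k) + 2 * (H k \<bullet> h)"
      using lin by (simp add: linear_add linear_diff inner_add_left inner_add_right inner_diff_left inner_diff_right algebra_simps)
    also have "\<dots> = 4 * (k \<bullet> H h)" using sym[of h k] by (simp add: inner_commute)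
    finally have eq: "H (h + k) \<bullet> (h + k) - H (h - k) \<bullet> (h - k) = 4 * (norm h * norm (H h))" using kH by simp
    have "H (h + k) \<bullet> (h + k) \<le> L * ((h + k) \<bullet> (h + k))" by (rule up)
    also have "(h + k) \<bullet> (h + k) = (norm (h + k))^2" by (simp add: power2_norm_eq_inner)
    also have "L * (norm (h + k))^2 \<le> L * (2 * norm h)^2"
    proof (rule mult_left_mono[OF _ L])
      have "norm (h + k) \<le> 2 * norm h" using norm_triangle_ineq[of h k] nk by simp
      then show "(norm (h + k))^2 \<le> (2 * norm h)^2" by (intro power_mono) auto
    qed
    finally have "4 * (norm h * norm (H h)) \<le> L * (2 * norm h)^2" using eq psd[of "h - k"] by linarith
    then have "norm h * norm (H h) \<le> norm h * (L * norm h)" by (simp add: power2_eq_square algebra_simps)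
    then show ?thesis using hne by simp
  qed
qed


lemma norm_add_sq_le: "(norm (a + b))\<^sup>2 \<le> 2 * (norm a)\<^sup>2 + 2 * (norm (b::'a::real_normed_vector))\<^sup>2"
proof -
  have "norm (a + b) \<le> norm a + norm b" by (rule norm_triangle_ineq)
  then have "(norm (a + b))\<^sup>2 \<le> (norm a + norm b)\<^sup>2" by (intro power_mono) auto
  also have "\<dots> \<le> 2 * (norm a)\<^sup>2 + 2 * (norm b)\<^sup>2"
    using zero_le_power2[of "norm a - norm b"] by (simp add: power2_eq_square algebra_simps)
  finally show ?thesis .
qed

lemma pair_var_identity:
  fixes X :: "nat \<Rightarrow> 'a::real_inner"
  shows "(\<Sum>i<m. \<Sum>j<m. (norm (X i - X j))\<^sup>2) = 2 * real m * (\<Sum>i<m. (norm (X i - (1/real m) *\<^sub>R (\<Sum>j<m. X j)))\<^sup>2)"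
proof (cases "m = 0")
  case True then show ?thesis by simp
next
  case False
  define xb where "xb = (1/real m) *\<^sub>R (\<Sum>j<m. X j)"
  define c where "c i = X i - xb" for i
  have sc: "(\<Sum>i<m. c i) = 0"
    unfolding c_def xb_def using False by (simp add: sum_subtractf sum_constant_scaleR)
  have dif: "X i - X j = c i - c j" for i j unfolding c_def by simp
  have sq: "(norm (c i - c j))\<^sup>2 = (norm (c i))\<^sup>2 + (norm (c j))\<^sup>2 - 2 * (c i \<bullet> c j)" for i j
    by (simp add: power2_norm_eq_inner inner_diff_left inner_diff_right inner_commute)
  have cross: "(\<Sum>i<m. \<Sum>j<m. c i \<bullet> c j) = 0"
    by (simp add: inner_sum_right[symmetric] sc)
  have "(\<Sum>i<m. \<Sum>j<m. (norm (X i - X j))\<^sup>2)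
      = (\<Sum>i<m. \<Sum>j<m. (norm (c i))\<^sup>2 + (norm (c j))\<^sup>2 - 2 * (c i \<bullet> c j))"
    unfolding dif sq ..
  also have "\<dots> = real m * (\<Sum>i<m. (norm (c i))\<^sup>2) + real m * (\<Sum>j<m. (norm (c j))\<^sup>2) - 2 * (\<Sum>i<m. \<Sum>j<m. c i \<bullet> c j)"
  proof -
    have "(\<Sum>i<m. \<Sum>j<m. (norm (c i))\<^sup>2 + (norm (c j))\<^sup>2 - 2 * (c i \<bullet> c j))
       = (\<Sum>i<m. \<Sum>j<m. (norm (c i))\<^sup>2) + (\<Sum>i<m. \<Sum>j<m. (norm (c j))\<^sup>2) - (\<Sum>i<m. \<Sum>j<m. 2 * (c i \<bullet> c j))"
      by (simp only: sum.distrib sum_subtractf)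
    also have "(\<Sum>i<m. \<Sum>j<m. (norm (c i))\<^sup>2) = real m * (\<Sum>i<m. (norm (c i))\<^sup>2)"
      by (simp add: sum_distrib_left)
    also have "(\<Sum>i<m. \<Sum>j<m. (norm (c j))\<^sup>2) = real m * (\<Sum>j<m. (norm (c j))\<^sup>2)"
      by simp
    also have "(\<Sum>i<m. \<Sum>j<m. 2 * (c i \<bullet> c j)) = 2 * (\<Sum>i<m. \<Sum>j<m. c i \<bullet> c j)"
      by (simp add: sum_distrib_left)
    finally show ?thesis .
  qed
  also have "\<dots> = 2 * real m * (\<Sum>i<m. (norm (c i))\<^sup>2)" unfolding cross by simp
  finally show ?thesis unfolding c_def xb_def .
qed


theorem lemma3p3:
  fixes m :: nat
    and K Om :: "'a::euclidean_space set"
    and f :: "nat \<Rightarrow> 'a \<Rightarrow> real" and gf :: "nat \<Rightarrow> 'a \<Rightarrow> 'a" and Hf :: "nat \<Rightarrow> 'a \<Rightarrow> 'a \<Rightarrow> 'a"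
    and G :: "'a \<Rightarrow> real"
    and \<mu> L :: real and Li :: "nat \<Rightarrow> real"
    and E :: "(nat \<times> nat) set" and w :: "nat \<Rightarrow> nat \<Rightarrow> real"
    and ft :: "nat \<Rightarrow> 'a \<Rightarrow> 'a \<Rightarrow> real" and gft :: "nat \<Rightarrow> 'a \<Rightarrow> 'a \<Rightarrow> 'a"
    and \<alpha> :: real
    and x y xh :: "nat \<Rightarrow> nat \<Rightarrow> 'a"   \<comment> \<open>x i \<nu> = x_i^\<nu>, y i \<nu> = y_i^\<nu>, xh i \<nu> = hat x_i^\<nu>\<close>
  assumes m_pos: "0 < m"
    \<comment> \<open>(A)\<close>
    and K_ne: "K \<noteq> {}" and K_closed: "closed K" and K_convex: "convex K"
    and O_open: "open Om" and KO: "K \<subseteq> Om"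
    and f_grad: "\<And>i z. i < m \<Longrightarrow> z \<in> Om \<Longrightarrow> (f i has_derivative (\<lambda>h. gf i z \<bullet> h)) (at z)"
    and f_hess: "\<And>i z. i < m \<Longrightarrow> z \<in> Om \<Longrightarrow> (gf i has_derivative Hf i z) (at z)"
    and f_convex: "\<And>i. i < m \<Longrightarrow> convex_fun_on Om (f i)"
    and mu_pos: "0 < \<mu>"
    and F_hess_lower: "\<And>z h. z \<in> K \<Longrightarrow> \<mu> * (h \<bullet> h) \<le> (1 / real m) * (\<Sum>i<m. Hf i z h \<bullet> h)"
    and F_hess_upper: "\<And>z h. z \<in> K \<Longrightarrow> (1 / real m) * (\<Sum>i<m. Hf i z h \<bullet> h) \<le> L * (h \<bullet> h)"
    and G_convex: "convex_on K G"
    and fi_hess_upper: "\<And>i z h. i < m \<Longrightarrow> z \<in> K \<Longrightarrow> Hf i z h \<bullet> h \<le> Li i * (h \<bullet> h)"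
    \<comment> \<open>(B)\<close>
    and E_sub: "E \<subseteq> {..<m} \<times> {..<m}" and E_sym: "sym E"
    and E_conn: "\<And>i j. i < m \<Longrightarrow> j < m \<Longrightarrow> (i, j) \<in> E\<^sup>*"
    \<comment> \<open>(W)\<close>
    and w_diag: "\<And>i. i < m \<Longrightarrow> 0 < w i i"
    and w_edge: "\<And>i j. i < m \<Longrightarrow> j < m \<Longrightarrow> i \<noteq> j \<Longrightarrow> (0 < w i j \<longleftrightarrow> (i, j) \<in> E)"
    and w_nonedge: "\<And>i j. i < m \<Longrightarrow> j < m \<Longrightarrow> i \<noteq> j \<Longrightarrow> (i, j) \<notin> E \<Longrightarrow> w i j = 0"
    and w_nonneg: "\<And>i j. i < m \<Longrightarrow> j < m \<Longrightarrow> 0 \<le> w i j"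
    and w_rows: "\<And>i. i < m \<Longrightarrow> (\<Sum>j<m. w i j) = 1"
    and w_cols: "\<And>j. j < m \<Longrightarrow> (\<Sum>i<m. w i j) = 1"
    \<comment> \<open>(C)\<close>
    and ft_C2: "\<And>i. i < m \<Longrightarrow> C2_on (Om \<times> Om) (\<lambda>p. ft i (fst p) (snd p))"
    and ft_grad: "\<And>i u z. i < m \<Longrightarrow> u \<in> Om \<Longrightarrow> z \<in> Om \<Longrightarrow>
                   ((\<lambda>v. ft i v z) has_derivative (\<lambda>h. gft i u z \<bullet> h)) (at u)"
    and ft_consistent: "\<And>i z. i < m \<Longrightarrow> z \<in> Om \<Longrightarrow> gft i z z = gf i z"
    and ft_lipschitz: "\<And>i z. i < m \<Longrightarrow> z \<in> K \<Longrightarrow> \<exists>C. C-lipschitz_on Om (\<lambda>u. gft i u z)"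
    and ft_strong: "\<And>i z. i < m \<Longrightarrow> z \<in> K \<Longrightarrow> strongly_convex_fun_on K (\<lambda>u. ft i u z)"
    \<comment> \<open>step size\<close>
    and alpha: "0 < \<alpha>" "\<alpha> \<le> 1"
    \<comment> \<open>SONATA iterates\<close>
    and x0: "\<And>i. i < m \<Longrightarrow> x i 0 \<in> K"
    and y0: "\<And>i. i < m \<Longrightarrow> y i 0 = gf i (x i 0)"
    and xh_in: "\<And>i n. i < m \<Longrightarrow> xh i n \<in> K"
    and xh_min: "\<And>i n z. i < m \<Longrightarrow> z \<in> K \<Longrightarrow>
        ft i (xh i n) (x i n) + (y i n - gf i (x i n)) \<bullet> (xh i n - x i n) + G (xh i n)
        \<le> ft i z (x i n) + (y i n - gf i (x i n)) \<bullet> (z - x i n) + G z"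
    and x_step: "\<And>i n. i < m \<Longrightarrow>
        x i (Suc n) = (\<Sum>j<m. w i j *\<^sub>R (x j n + \<alpha> *\<^sub>R (xh j n - x j n)))"
    and y_step: "\<And>i n. i < m \<Longrightarrow>
        y i (Suc n) = (\<Sum>j<m. w i j *\<^sub>R (y j n + gf j (x j (Suc n)) - gf j (x j n)))"
  shows "(\<Sum>i<m. (norm ((1 / real m) *\<^sub>R (\<Sum>j<m. gf j (x i \<nu>)) - y i \<nu>))\<^sup>2)
         \<le> 4 * (Max (Li ` {..<m}))\<^sup>2 * (\<Sum>i<m. (norm (x i \<nu> - (1 / real m) *\<^sub>R (\<Sum>j<m. x j \<nu>)))\<^sup>2)
           + 2 * (\<Sum>i<m. (norm (y i \<nu> - (1 / real m) *\<^sub>R (\<Sum>j<m. y j \<nu>)))\<^sup>2)"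
proof -
  define M where "M = Max (Li ` {..<m})"
  have LiM: "Li j \<le> M" if "j < m" for j
    unfolding M_def using that by (intro Max_ge) auto
  have conv_step: "x j n + \<alpha> *\<^sub>R (xh j n - x j n) \<in> K" if "j < m" "x j n \<in> K" for j n
  proof -
    have "(1 - \<alpha>) *\<^sub>R x j n + \<alpha> *\<^sub>R xh j n \<in> K"
      using convexD[OF K_convex that(2) xh_in[OF that(1)], of "1 - \<alpha>" \<alpha>] alpha by simp
    then show ?thesis by (simp add: algebra_simps)
  qed
  have xK: "x i n \<in> K" if "i < m" for i n
    using that
  proof (induction n arbitrary: i)
    case 0 then show ?case using x0 by simp
  next
    case (Suc n)
    show ?case unfolding x_step[OF Suc.prems]
      by (rule convex_sum) (use K_convex w_rows[OF Suc.prems] w_nonneg[OF Suc.prems] conv_step Suc.IH in auto)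
  qed
  have ysum: "(\<Sum>i<m. y i n) = (\<Sum>i<m. gf i (x i n))" for n
  proof (induction n)
    case 0 then show ?case using y0 by simp
  next
    case (Suc n)
    define Y where "Y j = y j n + gf j (x j (Suc n)) - gf j (x j n)" for j
    have "(\<Sum>i<m. y i (Suc n)) = (\<Sum>i<m. \<Sum>j<m. w i j *\<^sub>R Y j)"
      using y_step unfolding Y_def by simp
    also have "\<dots> = (\<Sum>j<m. \<Sum>i<m. w i j *\<^sub>R Y j)" by (rule sum.swap)
    also have "\<dots> = (\<Sum>j<m. (\<Sum>i<m. w i j) *\<^sub>R Y j)" by (simp add: scaleR_sum_left)
    also have "\<dots> = (\<Sum>j<m. Y j)" using w_cols by simp
    also have "\<dots> = (\<Sum>j<m. y j n) + (\<Sum>j<m. gf j (x j (Suc n))) - (\<Sum>j<m. gf j (x j n))"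
      unfolding Y_def by (simp add: sum.distrib sum_subtractf)
    finally show ?case using Suc.IH by simp
  qed
  have lip: "norm (gf j a - gf j b) \<le> M * norm (a - b)" if j: "j < m" and ab: "a \<in> K" "b \<in> K" for j a b
  proof -
    have fg: "\<And>z. z \<in> Om \<Longrightarrow> (f j has_derivative (\<lambda>h. gf j z \<bullet> h)) (at z)" using f_grad[OF j] .
    have on: "onorm (Hf j z) \<le> M" if z: "z \<in> K" for z
    proof (rule onorm_le)
      fix h
      have zO: "z \<in> Om" using z KO by auto
      have lin: "linear (Hf j z)" using has_derivative_linear[OF f_hess[OF j zO]] .
      show "norm (Hf j z h) \<le> M * norm h"
      proof (rule sym_psd_norm[OF lin])
        show "Hf j z v \<bullet> u = Hf j z u \<bullet> v" for u v
          by (rule hess_sym[OF O_open zO fg f_hess[OF j zO]])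
        show "0 \<le> Hf j z k \<bullet> k" for k
          by (rule hess_psd[OF O_open zO fg f_hess[OF j zO] f_convex[OF j]])
        show "Hf j z k \<bullet> k \<le> M * (k \<bullet> k)" for k
        proof -
          have "Hf j z k \<bullet> k \<le> Li j * (k \<bullet> k)" by (rule fi_hess_upper[OF j z])
          also have "\<dots> \<le> M * (k \<bullet> k)" using LiM[OF j] by (intro mult_right_mono) auto
          finally show ?thesis .
        qed
      qed
    qed
    show ?thesis
    proof (rule differentiable_bound[OF K_convex _ on ab])
      fix z assume z: "z \<in> K"
      then have "z \<in> Om" using KO by auto
      then show "(gf j has_derivative Hf j z) (at z within K)"
        using f_hess[OF j] has_derivative_at_withinI by blast
    qed
  qed
  define xb where "xb = (1/real m) *\<^sub>R (\<Sum>j<m. x j \<nu>)"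
  define yb where "yb = (1/real m) *\<^sub>R (\<Sum>j<m. y j \<nu>)"
  have yb2: "yb = (1/real m) *\<^sub>R (\<Sum>j<m. gf j (x j \<nu>))" unfolding yb_def ysum ..
  define a where "a i = (1/real m) *\<^sub>R (\<Sum>j<m. gf j (x i \<nu>)) - yb" for i
  have aeq: "a i = (1/real m) *\<^sub>R (\<Sum>j<m. gf j (x i \<nu>) - gf j (x j \<nu>))" for i
    unfolding a_def yb2 by (simp add: sum_subtractf scaleR_diff_right)
  have mpos: "real m > 0" using m_pos by simp
  have na: "norm (a i) \<le> (1/real m) * (\<Sum>j<m. M * norm (x i \<nu> - x j \<nu>))" if i: "i < m" for i
  proof -
    have "norm (a i) = (1/real m) * norm (\<Sum>j<m. gf j (x i \<nu>) - gf j (x j \<nu>))"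
      unfolding aeq using mpos by simp
    also have "\<dots> \<le> (1/real m) * (\<Sum>j<m. norm (gf j (x i \<nu>) - gf j (x j \<nu>)))"
      using mpos by (intro mult_left_mono norm_sum) auto
    also have "\<dots> \<le> (1/real m) * (\<Sum>j<m. M * norm (x i \<nu> - x j \<nu>))"
      using mpos by (intro mult_left_mono sum_mono lip xK i) auto
    finally show ?thesis .
  qed
  have na2: "(norm (a i))\<^sup>2 \<le> (M\<^sup>2 / real m) * (\<Sum>j<m. (norm (x i \<nu> - x j \<nu>))\<^sup>2)" if i: "i < m" for i
  proof -
    have "(norm (a i))\<^sup>2 \<le> ((1/real m) * (\<Sum>j<m. M * norm (x i \<nu> - x j \<nu>)))\<^sup>2"
      using na[OF i] by (intro power_mono) auto
    also have "\<dots> = (1/real m)\<^sup>2 * (\<Sum>j<m. M * norm (x i \<nu> - x j \<nu>))\<^sup>2"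
      by (simp only: power_mult_distrib)
    also have "\<dots> \<le> (1/real m)\<^sup>2 * ((\<Sum>j<m. (M * norm (x i \<nu> - x j \<nu>))\<^sup>2) * real m)"
      using sum_squared_le_sum_of_squares[of "\<lambda>j. M * norm (x i \<nu> - x j \<nu>)" "{..<m}"]
      by (intro mult_left_mono) auto
    also have "\<dots> = (M\<^sup>2 / real m) * (\<Sum>j<m. (norm (x i \<nu> - x j \<nu>))\<^sup>2)"
      using mpos by (simp add: power_mult_distrib sum_distrib_left[symmetric] power2_eq_square field_simps)
    finally show ?thesis .
  qed
  have suma: "(\<Sum>i<m. (norm (a i))\<^sup>2) \<le> 2 * M\<^sup>2 * (\<Sum>i<m. (norm (x i \<nu> - xb))\<^sup>2)"
  proof -
    have "(\<Sum>i<m. (norm (a i))\<^sup>2) \<le> (\<Sum>i<m. (M\<^sup>2 / real m) * (\<Sum>j<m. (norm (x i \<nu> - x j \<nu>))\<^sup>2))"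
      using na2 by (intro sum_mono) auto
    also have "\<dots> = (M\<^sup>2 / real m) * (\<Sum>i<m. \<Sum>j<m. (norm (x i \<nu> - x j \<nu>))\<^sup>2)"
      by (simp add: sum_distrib_left)
    also have "\<dots> = (M\<^sup>2 / real m) * (2 * real m * (\<Sum>i<m. (norm (x i \<nu> - xb))\<^sup>2))"
      unfolding xb_def using pair_var_identity[of "\<lambda>i. x i \<nu>" m] by simp
    also have "\<dots> = 2 * M\<^sup>2 * (\<Sum>i<m. (norm (x i \<nu> - xb))\<^sup>2)" using mpos by simp
    finally show ?thesis .
  qed
  have split: "(1 / real m) *\<^sub>R (\<Sum>j<m. gf j (x i \<nu>)) - y i \<nu> = a i + (yb - y i \<nu>)" for i
    unfolding a_def by simp
  have "(\<Sum>i<m. (norm ((1 / real m) *\<^sub>R (\<Sum>j<m. gf j (x i \<nu>)) - y i \<nu>))\<^sup>2)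
      \<le> (\<Sum>i<m. 2 * (norm (a i))\<^sup>2 + 2 * (norm (y i \<nu> - yb))\<^sup>2)"
    unfolding split using norm_add_sq_le by (intro sum_mono) (simp add: norm_minus_commute)
  also have "\<dots> = 2 * (\<Sum>i<m. (norm (a i))\<^sup>2) + 2 * (\<Sum>i<m. (norm (y i \<nu> - yb))\<^sup>2)"
    by (simp add: sum.distrib sum_distrib_left)
  also have "\<dots> \<le> 2 * (2 * M\<^sup>2 * (\<Sum>i<m. (norm (x i \<nu> - xb))\<^sup>2)) + 2 * (\<Sum>i<m. (norm (y i \<nu> - yb))\<^sup>2)"
    using suma by simp
  finally show ?thesis unfolding M_def xb_def yb_def by simp
qed

end
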